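(* Let $\pi_0:Z_0\to Z$ be the minimal resolution of a log terminal surface singularity, with exceptional curves $E_1,\dots,E_r$, $b_i=-E_i^2$, and numerical cycle $Z_{\mathrm{num}}$. Let $D=\sum_{i=1}^r n_iE_i$ be an effective exceptional divisor and let $s$ be the minimal integer with $D\le sZ_{\mathrm{num}}$. Then $$-D^2\ge 2s+\sum_{i=1}^r(b_i-2)n_i.$$
   Context: The numerical cycle $Z_{\mathrm{num}}$ is the minimal nonzero effective $\pi_0$-exceptional divisor $F$ with $F\cdot E_i\le0$ for all $i$. *)

theory Defs
  imports Complex_Main
begin

text \<open>Exceptional curves are indexed by 0..<r; M i j is the intersection number E_i . E_j
  (so b_i = - M i i).  Divisors supported on the exceptional locus are functions
  nat => int (coefficients n_i of E_i, for i < r).\<close>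

definition inter :: "nat \<Rightarrow> (nat \<Rightarrow> nat \<Rightarrow> int) \<Rightarrow> (nat \<Rightarrow> int) \<Rightarrow> (nat \<Rightarrow> int) \<Rightarrow> int" where
  "inter r M D F = (\<Sum>i<r. \<Sum>j<r. D i * F j * M i j)"

definition inter_curve :: "nat \<Rightarrow> (nat \<Rightarrow> nat \<Rightarrow> int) \<Rightarrow> (nat \<Rightarrow> int) \<Rightarrow> nat \<Rightarrow> int" where
  "inter_curve r M D k = (\<Sum>i<r. D i * M i k)"

definition effective :: "nat \<Rightarrow> (nat \<Rightarrow> int) \<Rightarrow> bool" where
  "effective r D \<longleftrightarrow> (\<forall>i<r. 0 \<le> D i)"

definition div_le :: "nat \<Rightarrow> (nat \<Rightarrow> int) \<Rightarrow> (nat \<Rightarrow> int) \<Rightarrow> bool" where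
  "div_le r D F \<longleftrightarrow> (\<forall>i<r. D i \<le> F i)"

definition num_cycle_cand :: "nat \<Rightarrow> (nat \<Rightarrow> nat \<Rightarrow> int) \<Rightarrow> (nat \<Rightarrow> int) \<Rightarrow> bool" where
  "num_cycle_cand r M F \<longleftrightarrow> effective r F \<and> (\<exists>i<r. F i \<noteq> 0) \<and> (\<forall>k<r. inter_curve r M F k \<le> 0)"

definition is_num_cycle :: "nat \<Rightarrow> (nat \<Rightarrow> nat \<Rightarrow> int) \<Rightarrow> (nat \<Rightarrow> int) \<Rightarrow> bool" where
  "is_num_cycle r M Z \<longleftrightarrow> num_cycle_cand r M Z \<and> (\<forall>F. num_cycle_cand r M F \<longrightarrow> div_le r Z F)"

definition dual_edge :: "nat \<Rightarrow> (nat \<Rightarrow> nat \<Rightarrow> int) \<Rightarrow> nat \<Rightarrow> nat \<Rightarrow> bool" where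
  "dual_edge r M i j \<longleftrightarrow> i < r \<and> j < r \<and> i \<noteq> j \<and> M i j = 1"

definition dual_tree :: "nat \<Rightarrow> (nat \<Rightarrow> nat \<Rightarrow> int) \<Rightarrow> bool" where
  "dual_tree r M \<longleftrightarrow>
     (\<forall>i<r. \<forall>j<r. (dual_edge r M)\<^sup>*\<^sup>* i j) \<and>
     card {(i, j). i < j \<and> dual_edge r M i j} = r - 1"

definition neg_definite :: "nat \<Rightarrow> (nat \<Rightarrow> nat \<Rightarrow> int) \<Rightarrow> bool" where
  "neg_definite r M \<longleftrightarrow>
     (\<forall>x :: nat \<Rightarrow> real. (\<exists>i<r. x i \<noteq> 0) \<longrightarrow> (\<Sum>i<r. \<Sum>j<r. x i * x j * of_int (M i j)) < 0)"

text \<open>Discrepancies: K_{Z_0} = sum a_i E_i numerically over Z, determined by adjunction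
  K . E_i = -2 - E_i^2 (E_i smooth rational).  Log terminal: all a_i > -1.\<close>
definition discrepancies_gt_minus_one :: "nat \<Rightarrow> (nat \<Rightarrow> nat \<Rightarrow> int) \<Rightarrow> bool" where
  "discrepancies_gt_minus_one r M \<longleftrightarrow>
     (\<forall>a :: nat \<Rightarrow> real. (\<forall>k<r. (\<Sum>i<r. a i * of_int (M i k)) = - 2 - of_int (M k k))
        \<longrightarrow> (\<forall>i<r. a i > -1))"

text \<open>Numerical data of the minimal resolution of a (singular) log terminal surface singularity:
  r >= 1 smooth rational exceptional curves with simple normal crossings forming a tree,
  negative definite intersection matrix, no (-1)-curves (b_i >= 2), and discrepancies > -1.\<close>
definition log_terminal_min_res :: "nat \<Rightarrow> (nat \<Rightarrow> nat \<Rightarrow> int) \<Rightarrow> bool" where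
  "log_terminal_min_res r M \<longleftrightarrow>
     0 < r \<and>
     (\<forall>i<r. \<forall>j<r. M i j = M j i) \<and>
     (\<forall>i<r. \<forall>j<r. i \<noteq> j \<longrightarrow> M i j = 0 \<or> M i j = 1) \<and>
     (\<forall>i<r. M i i \<le> -2) \<and>
     dual_tree r M \<and>
     neg_definite r M \<and>
     discrepancies_gt_minus_one r M"

end

theory Submission imports Defs "Jordan_Normal_Form.Determinant" begin

lemma exists_solution:
  fixes M :: "nat \<Rightarrow> nat \<Rightarrow> int" and b :: "nat \<Rightarrow> real"
  assumes nd: "neg_definite r M"
  shows "\<exists>a :: nat \<Rightarrow> real. \<forall>k<r. (\<Sum>i<r. a i * of_int (M i k)) = b k"
proof -
  define A :: "real mat" where "A = mat r r (\<lambda>(k,i). of_int (M i k))"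
  have Ac: "A \<in> carrier_mat r r" unfolding A_def by auto
  have "det A \<noteq> 0"
  proof
    assume "det A = 0"
    then obtain v where v: "v \<in> carrier_vec r" "v \<noteq> 0\<^sub>v r" "A *\<^sub>v v = 0\<^sub>v r"
      using det_0_iff_vec_prod_zero_field[OF Ac] by auto
    define x where "x i = v $ i" for i
    obtain i where i: "i < r" "x i \<noteq> 0" using v(1,2) unfolding x_def
      by (metis eq_vecI index_zero_vec(1) index_zero_vec(2) carrier_vecD)
    have row0: "(\<Sum>j<r. x j * of_int (M j k)) = 0" if "k < r" for k
    proof -
      have "(A *\<^sub>v v) $ k = 0" using v(3) that by simp
      hence "(\<Sum>j<r. of_int (M j k) * v $ j) = 0"
        using that v(1) by (simp add: A_def mult_mat_vec_def scalar_prod_def atLeast0LessThan)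
      thus ?thesis unfolding x_def by (simp add: mult.commute)
    qed
    have "(\<Sum>k<r. \<Sum>j<r. x k * x j * of_int (M k j)) = (\<Sum>k<r. x k * (\<Sum>j<r. x j * of_int (M j k)))"
      by (subst sum.swap) (simp add: sum_distrib_left mult_ac)
    also have "\<dots> = 0" using row0 by simp
    finally show False using nd i unfolding neg_definite_def by fastforce
  qed
  hence "A \<in> Units (ring_mat TYPE(real) r ())" using det_non_zero_imp_unit[OF Ac] by auto
  then obtain B where B: "B \<in> carrier_mat r r" "A * B = 1\<^sub>m r"
    unfolding Units_def ring_mat_def by auto
  define bv where "bv = vec r b"
  define av where "av = B *\<^sub>v bv"
  have "A *\<^sub>v av = bv" unfolding av_def
    using assoc_mult_mat_vec[OF Ac B(1), of bv] B(2) by (simp add: bv_def)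
  show ?thesis
  proof (intro exI allI impI)
    fix k assume k: "k < r"
    have "(A *\<^sub>v av) $ k = b k" using \<open>A *\<^sub>v av = bv\<close> k by (simp add: bv_def)
    moreover have "dim_vec av = r" unfolding av_def using B(1) by simp
    ultimately show "(\<Sum>i<r. av $ i * of_int (M i k)) = b k"
      using k by (simp add: A_def mult_mat_vec_def scalar_prod_def atLeast0LessThan mult.commute)
  qed
qed


definition chi :: "nat \<Rightarrow> (nat \<Rightarrow> nat \<Rightarrow> int) \<Rightarrow> (nat \<Rightarrow> int) \<Rightarrow> int" where
  "chi r M A = - inter r M A A - (\<Sum>i<r. (- M i i - 2) * A i)"

lemma inter_sym:
  assumes "\<forall>i<r. \<forall>j<r. M i j = M j i"
  shows "inter r M C B = inter r M B C"
proof -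
  have "inter r M C B = (\<Sum>j<r. \<Sum>i<r. C i * B j * M i j)"
    unfolding inter_def by (rule sum.swap)
  also have "\<dots> = inter r M B C" unfolding inter_def
    using assms by (intro sum.cong refl) (simp add: mult_ac)
  finally show ?thesis .
qed

lemma chi_add:
  assumes "\<forall>i<r. \<forall>j<r. M i j = M j i"
  shows "chi r M (\<lambda>i. B i + C i) = chi r M B + chi r M C - 2 * inter r M B C"
proof -
  have "inter r M (\<lambda>i. B i + C i) (\<lambda>i. B i + C i) =
     inter r M B B + inter r M B C + inter r M C B + inter r M C C"
    unfolding inter_def by (simp add: algebra_simps sum.distrib)
  moreover have "(\<Sum>i<r. (- M i i - 2) * (B i + C i)) = (\<Sum>i<r. (- M i i - 2) * B i) + (\<Sum>i<r. (- M i i - 2) * C i)"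
    by (simp add: distrib_left sum.distrib)
  ultimately show ?thesis using inter_sym[OF assms, of C B]
    unfolding chi_def by simp
qed

lemma delta_mult: "(if b then (x::int) else 0) * y = (if b then x*y else 0)" "y * (if b then (x::int) else 0) = (if b then y*x else 0)" by simp_all

lemma chi_unit:
  assumes "j < r"
  shows "chi r M (\<lambda>i. if i = j then 1 else 0) = 2"
proof -
  have "inter r M (\<lambda>i. if i = j then 1 else 0) (\<lambda>i. if i = j then 1 else 0) = (\<Sum>i<r. if i = j then (\<Sum>k<r. if k = j then M i k else 0) else 0)"
    unfolding inter_def by (intro sum.cong refl) (simp add: delta_mult)
  also have "\<dots> = M j j" using assms by (simp only: sum.delta finite_lessThan lessThan_iff if_True)
  moreover have "(\<Sum>i<r. (- M i i - 2) * (if i = j then 1 else 0)) = - M j j - 2"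
    using assms by (simp only: delta_mult mult_1_right sum.delta finite_lessThan lessThan_iff if_True)
  ultimately show ?thesis unfolding chi_def by simp
qed

lemma inter_unit:
  assumes "j < r"
  shows "inter r M B (\<lambda>i. if i = j then 1 else 0) = (\<Sum>i<r. B i * M i j)"
proof -
  have "inter r M B (\<lambda>i. if i = j then 1 else 0) = (\<Sum>i<r. \<Sum>k<r. if k = j then B i * M i k else 0)"
    unfolding inter_def by (intro sum.cong refl) auto
  thus ?thesis using assms by (simp add: sum.delta)
qed

lemma negativity:
  fixes x :: "nat \<Rightarrow> real"
  assumes nd: "neg_definite r M" and off: "\<forall>i<r. \<forall>j<r. i \<noteq> j \<longrightarrow> 0 \<le> M i j"
    and h: "\<forall>k<r. x k > 0 \<longrightarrow> (\<Sum>i<r. x i * of_int (M i k)) \<ge> 0"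
  shows "\<forall>k<r. x k \<le> 0"
proof -
  define P where "P i = max (x i) 0" for i
  have P1: "(\<Sum>i<r. P i * of_int (M i k)) \<ge> 0" if k: "k < r" "x k > 0" for k
  proof -
    have "(\<Sum>i<r. x i * of_int (M i k)) \<le> (\<Sum>i<r. P i * of_int (M i k))"
    proof (intro sum_mono)
      fix i assume i: "i \<in> {..<r}"
      show "x i * of_int (M i k) \<le> P i * of_int (M i k)"
      proof (cases "i = k")
        case True thus ?thesis using k by (simp add: P_def)
      next
        case False
        hence "0 \<le> M i k" using off i k by auto
        thus ?thesis by (intro mult_right_mono) (auto simp: P_def)
      qed
    qed
    thus ?thesis using h k by force
  qed
  have "(\<Sum>k<r. \<Sum>j<r. P k * P j * of_int (M k j)) = (\<Sum>k<r. P k * (\<Sum>j<r. P j * of_int (M j k)))"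
    by (subst sum.swap) (simp add: sum_distrib_left mult_ac)
  also have "\<dots> \<ge> 0"
  proof (intro sum_nonneg)
    fix k assume k: "k \<in> {..<r}"
    show "0 \<le> P k * (\<Sum>j<r. P j * of_int (M j k))"
    proof (cases "x k > 0")
      case True thus ?thesis using P1[of k] k by (simp add: P_def)
    next
      case False thus ?thesis by (simp add: P_def)
    qed
  qed
  finally have "\<not> (\<exists>i<r. P i \<noteq> 0)" using nd unfolding neg_definite_def by force
  thus ?thesis by (auto simp: P_def)
qed

lemma artin:
  fixes M :: "nat \<Rightarrow> nat \<Rightarrow> int" and a :: "nat \<Rightarrow> real"
  assumes nd: "neg_definite r M" and off: "\<forall>i<r. \<forall>j<r. i \<noteq> j \<longrightarrow> 0 \<le> M i j"
    and sym: "\<forall>i<r. \<forall>j<r. M i j = M j i"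
    and adj: "\<forall>k<r. (\<Sum>i<r. a i * of_int (M i k)) = - 2 - of_int (M k k)"
    and agt: "\<forall>i<r. a i > -1" and ale: "\<forall>i<r. a i \<le> 0"
  shows "\<forall>A. effective r A \<longrightarrow> (\<exists>i<r. A i \<noteq> 0) \<longrightarrow> (\<Sum>i<r. nat (A i)) = m \<longrightarrow> chi r M A \<ge> 2"
proof (induction m rule: less_induct)
  case (less m)
  show ?case
  proof (intro allI impI)
    fix A assume eff: "effective r A" and nz: "\<exists>i<r. A i \<noteq> 0" and sm: "(\<Sum>i<r. nat (A i)) = m"
    show "chi r M A \<ge> 2"
    proof (rule ccontr)
      assume lt: "\<not> chi r M A \<ge> 2"
      define Y where "Y i = of_int (A i) + a i" for i
      have key: "(\<Sum>i<r. Y i * of_int (M i k)) \<ge> 0" if k: "k < r" "Y k > 0" for k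
      proof -
        have Ak: "A k \<ge> 1"
        proof (rule ccontr)
          assume "\<not> A k \<ge> 1"
          hence "A k = 0" using eff k unfolding effective_def by force
          thus False using k ale unfolding Y_def by force
        qed
        define E where "E i = (if i = k then 1 else (0::int))" for i
        define B where "B i = (if i = k then A i - 1 else A i)" for i
        have AB: "A = (\<lambda>i. B i + E i)" unfolding B_def E_def by auto
        have Eeq: "E = (\<lambda>i. if i = k then 1 else 0)" unfolding E_def by auto
        have chiA: "chi r M A = chi r M B + 2 - 2 * (\<Sum>i<r. B i * M i k)"
          using chi_add[OF sym, of B E] chi_unit[OF k(1), of M] inter_unit[OF k(1), of M B] AB Eeq
          by simp
        have I2: "(\<Sum>i<r. B i * M i k) \<ge> 2"
        proof (cases "\<exists>i<r. B i \<noteq> 0")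
          case True
          have effB: "effective r B" using eff Ak unfolding effective_def B_def by auto
          have "(\<Sum>i<r. nat (A i)) = (\<Sum>i<r. nat (B i) + (if i = k then 1 else 0))"
            using Ak by (intro sum.cong refl) (auto simp: B_def)
          also have "\<dots> = (\<Sum>i<r. nat (B i)) + 1" using k(1) by (simp add: sum.distrib)
          finally have "(\<Sum>i<r. nat (B i)) < m" using sm by simp
          hence "chi r M B \<ge> 2" using less effB True by blast
          thus ?thesis using chiA lt by linarith
        next
          case False
          hence "chi r M B = 0" "(\<Sum>i<r. B i * M i k) = 0" unfolding chi_def inter_def by auto
          thus ?thesis using chiA lt by linarith
        qed
        have "(\<Sum>i<r. A i * M i k) = (\<Sum>i<r. B i * M i k + (if i = k then M i k else 0))"
          by (intro sum.cong refl) (auto simp: B_def algebra_simps)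
        also have "\<dots> = (\<Sum>i<r. B i * M i k) + M k k" using k(1) by (simp add: sum.distrib)
        finally have IA: "(\<Sum>i<r. A i * M i k) \<ge> 2 + M k k" using I2 by linarith
        have "(\<Sum>i<r. Y i * of_int (M i k)) = of_int (\<Sum>i<r. A i * M i k) + (\<Sum>i<r. a i * of_int (M i k))"
          unfolding Y_def by (simp add: algebra_simps sum.distrib)
        also have "\<dots> = of_int (\<Sum>i<r. A i * M i k) - 2 - of_int (M k k)" using adj k(1) by simp
        also have "\<dots> \<ge> 0" using IA by linarith
        finally show ?thesis .
      qed
      have "\<forall>k<r. Y k \<le> 0" using negativity[OF nd off, of Y] key by blast
      moreover obtain i where "i < r" "A i \<noteq> 0" using nz by auto
      ultimately show False using eff agt unfolding effective_def Y_def by force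
    qed
  qed
qed

lemma main_ind:
  fixes M :: "nat \<Rightarrow> nat \<Rightarrow> int" and Z :: "nat \<Rightarrow> int"
  assumes sym: "\<forall>i<r. \<forall>j<r. M i j = M j i"
    and off: "\<forall>i<r. \<forall>j<r. i \<noteq> j \<longrightarrow> 0 \<le> M i j"
    and art: "\<And>A. effective r A \<Longrightarrow> (\<exists>i<r. A i \<noteq> 0) \<Longrightarrow> chi r M A \<ge> 2"
    and Zeff: "effective r Z" and Zneg: "\<forall>k<r. inter_curve r M Z k \<le> 0"
  shows "\<forall>D. effective r D \<longrightarrow> div_le r D (\<lambda>i. int k * Z i) \<longrightarrow>
     (k \<ge> 1 \<longrightarrow> \<not> div_le r D (\<lambda>i. (int k - 1) * Z i)) \<longrightarrow> chi r M D \<ge> 2 * int k"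
proof (induction k)
  case 0
  show ?case
  proof (intro allI impI)
    fix D assume "effective r D" "div_le r D (\<lambda>i. int 0 * Z i)"
    hence "\<forall>i<r. D i = 0" unfolding effective_def div_le_def by force
    hence "chi r M D = 0" unfolding chi_def inter_def by simp
    thus "chi r M D \<ge> 2 * int 0" by simp
  qed
next
  case (Suc m)
  show ?case
  proof (intro allI impI)
    fix D assume eff: "effective r D" and le: "div_le r D (\<lambda>i. int (Suc m) * Z i)"
      and nle: "Suc m \<ge> 1 \<longrightarrow> \<not> div_le r D (\<lambda>i. (int (Suc m) - 1) * Z i)"
    define A where "A i = min (D i) (Z i)" for i
    define D' where "D' i = max (D i - Z i) 0" for i
    have DAD: "D = (\<lambda>i. A i + D' i)" unfolding A_def D'_def by (auto simp: fun_eq_iff)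
    have nle': "\<not> div_le r D (\<lambda>i. int m * Z i)" using nle by simp
    then obtain i where i: "i < r" "D i > int m * Z i" unfolding div_le_def by force
    have "Z i \<ge> 0" using Zeff i unfolding effective_def by auto
    hence "Z i > 0"
      using i le unfolding div_le_def
      by (metis mult_nonneg_nonneg of_nat_0_le_iff mult_zero_right order.strict_trans2 order_le_less)
    hence "A i \<noteq> 0" using i \<open>Z i \<ge> 0\<close> unfolding A_def
      by (smt (verit) mult_nonneg_nonneg of_nat_0_le_iff)
    moreover have "effective r A" using eff Zeff unfolding effective_def A_def by auto
    ultimately have chiA: "chi r M A \<ge> 2" using art i(1) by blast
    have effD': "effective r D'" unfolding effective_def D'_def by auto
    have leD': "div_le r D' (\<lambda>i. int m * Z i)"
      using le Zeff unfolding div_le_def D'_def effective_def by (auto simp: algebra_simps)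
    have nleD': "m \<ge> 1 \<longrightarrow> \<not> div_le r D' (\<lambda>i. (int m - 1) * Z i)"
    proof (intro impI notI)
      assume "m \<ge> 1" "div_le r D' (\<lambda>i. (int m - 1) * Z i)"
      hence "div_le r D (\<lambda>i. int m * Z i)" unfolding div_le_def D'_def
        by (auto simp: algebra_simps)
      thus False using nle' by simp
    qed
    have chiD': "chi r M D' \<ge> 2 * int m" using Suc effD' leD' nleD' by blast
    have "inter r M A D' = (\<Sum>j<r. D' j * (\<Sum>i<r. A i * M i j))"
      unfolding inter_def by (subst sum.swap) (simp add: sum_distrib_left mult_ac)
    also have "\<dots> \<le> 0"
    proof (intro sum_nonpos)
      fix j assume j: "j \<in> {..<r}"
      show "D' j * (\<Sum>i<r. A i * M i j) \<le> 0"
      proof (cases "D' j = 0")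
        case True thus ?thesis by simp
      next
        case False
        hence Aj: "A j = Z j" unfolding D'_def A_def by auto
        have "(\<Sum>i<r. A i * M i j) \<le> (\<Sum>i<r. Z i * M i j)"
        proof (intro sum_mono)
          fix i assume i: "i \<in> {..<r}"
          show "A i * M i j \<le> Z i * M i j"
          proof (cases "i = j")
            case True thus ?thesis using Aj by simp
          next
            case False
            hence "0 \<le> M i j" using off i j by auto
            thus ?thesis by (intro mult_right_mono) (auto simp: A_def)
          qed
        qed
        also have "\<dots> \<le> 0" using Zneg j unfolding inter_curve_def by auto
        finally show ?thesis using effD' j unfolding effective_def
          by (simp add: mult_nonneg_nonpos)
      qed
    qed
    finally have "inter r M A D' \<le> 0" .
    moreover have "chi r M D = chi r M A + chi r M D' - 2 * inter r M A D'"
      using chi_add[OF sym, of A D'] DAD by simp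
    ultimately show "chi r M D \<ge> 2 * int (Suc m)" using chiA chiD' by simp
  qed
qed

theorem mainTheorem11:
  fixes r :: nat and M :: "nat \<Rightarrow> nat \<Rightarrow> int"
    and Z n :: "nat \<Rightarrow> int" and s :: int
  assumes "log_terminal_min_res r M"
    and "is_num_cycle r M Z"
    and "effective r n"
    and "div_le r n (\<lambda>i. s * Z i)"
    and "\<forall>t :: int. div_le r n (\<lambda>i. t * Z i) \<longrightarrow> s \<le> t"
  shows "- inter r M n n \<ge> 2 * s + (\<Sum>i<r. (- M i i - 2) * n i)"
proof -
  have sym: "\<forall>i<r. \<forall>j<r. M i j = M j i" and off01: "\<forall>i<r. \<forall>j<r. i \<noteq> j \<longrightarrow> M i j = 0 \<or> M i j = 1"
    and diag: "\<forall>i<r. M i i \<le> -2" and nd: "neg_definite r M" and disc: "discrepancies_gt_minus_one r M"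
    using assms(1) unfolding log_terminal_min_res_def by auto
  have off: "\<forall>i<r. \<forall>j<r. i \<noteq> j \<longrightarrow> 0 \<le> M i j"
  proof (intro allI impI)
    fix i j assume "i < r" "j < r" "i \<noteq> j"
    hence "M i j = 0 \<or> M i j = 1" using off01 by blast
    thus "0 \<le> M i j" by linarith
  qed
  obtain a :: "nat \<Rightarrow> real" where adj: "\<forall>k<r. (\<Sum>i<r. a i * of_int (M i k)) = - 2 - of_int (M k k)"
    using exists_solution[OF nd, of "\<lambda>k. - 2 - of_int (M k k)"] by blast
  have agt: "\<forall>i<r. a i > -1" using disc[unfolded discrepancies_gt_minus_one_def, rule_format, of a] adj by blast
  have ale: "\<forall>i<r. a i \<le> 0"
  proof (rule negativity[OF nd off], intro allI impI)
    fix k assume k: "k < r" "a k > 0"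
    have e: "(\<Sum>i<r. a i * of_int (M i k)) = - 2 - of_int (M k k)" using adj k(1) by blast
    have "M k k \<le> -2" using diag k(1) by blast
    hence "of_int (M k k) \<le> (-2::real)" by simp
    thus "(\<Sum>i<r. a i * of_int (M i k)) \<ge> 0" using e by linarith
  qed
  have art: "chi r M A \<ge> 2" if "effective r A" "\<exists>i<r. A i \<noteq> 0" for A
    using artin[OF nd off sym adj agt ale] that by blast
  have Zeff: "effective r Z" and Zneg: "\<forall>k<r. inter_curve r M Z k \<le> 0" and Znz: "\<exists>i<r. Z i \<noteq> 0"
    using assms(2) unfolding is_num_cycle_def num_cycle_cand_def by auto
  obtain i where i: "i < r" "Z i \<noteq> 0" using Znz by blast
  have "Z i \<ge> 0" using i(1) Zeff unfolding effective_def by blast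
  hence Zi: "Z i > 0" using i(2) by linarith
  have "0 \<le> n i" using assms(3) i(1) unfolding effective_def by blast
  moreover have "n i \<le> s * Z i" using assms(4) i(1) unfolding div_le_def by blast
  ultimately have "0 \<le> s * Z i" by linarith
  with Zi have s0: "s \<ge> 0" by (simp add: zero_le_mult_iff)
  have nle: "\<not> div_le r n (\<lambda>i. (s - 1) * Z i)"
  proof
    assume "div_le r n (\<lambda>i. (s - 1) * Z i)"
    hence "s \<le> s - 1" using assms(5) by blast
    thus False by simp
  qed
  have ns: "int (nat s) = s" using s0 by simp
  have MI: "\<forall>D. effective r D \<longrightarrow> div_le r D (\<lambda>i. s * Z i) \<longrightarrow>
     (nat s \<ge> 1 \<longrightarrow> \<not> div_le r D (\<lambda>i. (s - 1) * Z i)) \<longrightarrow> chi r M D \<ge> 2 * s"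
    using main_ind[OF sym off art Zeff Zneg, of "nat s"] unfolding ns .
  have "chi r M n \<ge> 2 * s" using MI assms(3,4) nle by blast
  thus ?thesis unfolding chi_def by simp
qed

end
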